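(* Let $f_1,f_2,f_3$ be smooth nowhere-vanishing functions on $\mathbb R^3$ and $g=\frac{1}{f_1^2}dx^1\otimes dx^1+\frac{1}{f_2^2}dx^2\otimes dx^2+\frac{1}{f_3^2}dx^3\otimes dx^3$, with $E_i=f_i\frac{\partial}{\partial x^i}$. (i) $E_2$ is a Killing vector field of $(\mathbb R^3,g)$ if and only if $f_2$ depends only on $x^2$ and $f_1,f_3$ depend only on $(x^1,x^3)$. (ii) $E_3$ is a Killing vector field of $(\mathbb R^3,g)$ if and only if $f_3$ depends only on $x^3$ and $f_1,f_2$ depend only on $(x^1,x^2)$.
   Context: $x^1,x^2,x^3$ are the standard coordinates on $\mathbb R^3$. A vector field $V$ is Killing if $\mathcal L_Vg=0$. *)

theory Defs
  imports "HOL-Analysis.Analysis"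
begin

text \<open>Points of R^3 are vectors of type real^3; the coordinate x^i of x is x $ i,
  with i :: 3 ranging over 1, 2, 3.\<close>

definition pd :: "3 \<Rightarrow> (real^3 \<Rightarrow> real) \<Rightarrow> real^3 \<Rightarrow> real" where
  "pd i f x = deriv (\<lambda>t. f (x + t *\<^sub>R axis i 1)) 0"

fun iter_pd :: "3 list \<Rightarrow> (real^3 \<Rightarrow> real) \<Rightarrow> real^3 \<Rightarrow> real" where
  "iter_pd [] f = f"
| "iter_pd (i # is) f = pd i (iter_pd is f)"

definition smooth3 :: "(real^3 \<Rightarrow> real) \<Rightarrow> bool" where
  "smooth3 f \<longleftrightarrow> (\<forall>is x. iter_pd is f differentiable (at x))"

text \<open>A (0,2)-tensor field in coordinates: components g i j; a vector field V = V^k d/dx^k.\<close>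
type_synonym metric3 = "3 \<Rightarrow> 3 \<Rightarrow> real^3 \<Rightarrow> real"
type_synonym vfield3 = "3 \<Rightarrow> real^3 \<Rightarrow> real"

definition lie_deriv_metric :: "vfield3 \<Rightarrow> metric3 \<Rightarrow> metric3" where
  "lie_deriv_metric V g i j x =
     (\<Sum>k\<in>UNIV. V k x * pd k (g i j) x + g k j x * pd i (V k) x + g i k x * pd j (V k) x)"

definition killing :: "metric3 \<Rightarrow> vfield3 \<Rightarrow> bool" where
  "killing g V \<longleftrightarrow> (\<forall>i j x. lie_deriv_metric V g i j x = 0)"

definition diag_metric :: "(3 \<Rightarrow> real^3 \<Rightarrow> real) \<Rightarrow> metric3" where
  "diag_metric f i j x = (if i = j then 1 / (f i x)^2 else 0)"

definition frame_field :: "(3 \<Rightarrow> real^3 \<Rightarrow> real) \<Rightarrow> 3 \<Rightarrow> vfield3" where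
  "frame_field f i k x = (if k = i then f i x else 0)"

end

theory Submission
  imports Defs
begin

lemma line_deriv:
  assumes "f differentiable (at x)"
  shows "((\<lambda>t. f (x + t *\<^sub>R axis k 1)) has_real_derivative pd k f x) (at 0)"
proof -
  have "(\<lambda>t::real. x + t *\<^sub>R axis k (1::real)) differentiable (at 0)"
    by (intro derivative_intros)
  moreover have "f differentiable (at ((\<lambda>t::real. x + t *\<^sub>R axis k (1::real)) 0))"
    using assms by simp
  ultimately have "(f \<circ> (\<lambda>t::real. x + t *\<^sub>R axis k (1::real))) differentiable (at 0)"
    by (rule differentiable_chain_at)
  then show ?thesis unfolding pd_def
    by (simp add: DERIV_deriv_iff_real_differentiable[symmetric] o_def)
qed

lemma pd_const: "pd k (\<lambda>x. c) x = 0"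
  unfolding pd_def by simp

lemma pd_inv_sq:
  assumes "f differentiable (at x)" "f x \<noteq> 0"
  shows "pd k (\<lambda>x. 1 / (f x)^2) x = -2 * pd k f x / (f x)^3"
proof -
  have d: "((\<lambda>t. f (x + t *\<^sub>R axis k 1)) has_real_derivative pd k f x) (at 0)"
    by (rule line_deriv[OF assms(1)])
  have "((\<lambda>t. 1 / (f (x + t *\<^sub>R axis k 1))^2) has_real_derivative
     (- (1 * (2 * (pd k f x * f x)) / f x ^ 4))) (at 0)"
    using DERIV_divide[OF DERIV_const[of 1] DERIV_power[OF d, of 2]] assms(2) by simp
  then have "pd k (\<lambda>x. 1 / (f x)^2) x = (- (1 * (2 * (pd k f x * f x)) / f x ^ 4))"
    unfolding pd_def by (rule DERIV_imp_deriv)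
  also have "\<dots> = -2 * pd k f x / (f x)^3" using assms(2) by (simp add: field_simps power2_eq_square power3_eq_cube power4_eq_xxxx)
  finally show ?thesis .
qed

lemma const_line:
  assumes "\<And>y. f differentiable (at y)" "\<And>y. pd k f y = 0"
  shows "f (x + t *\<^sub>R axis k 1) = f x"
proof -
  let ?g = "\<lambda>t. f (x + t *\<^sub>R axis k 1)"
  have "\<forall>s. DERIV ?g s :> 0"
  proof
    fix s
    have "((\<lambda>u. f ((x + s *\<^sub>R axis k 1) + u *\<^sub>R axis k 1)) has_real_derivative 0) (at 0)"
      using line_deriv[OF assms(1), of "x + s *\<^sub>R axis k 1" k] assms(2) by simp
    moreover have "(\<lambda>u. f ((x + s *\<^sub>R axis k 1) + u *\<^sub>R axis k 1)) = (\<lambda>u. ?g (u + s))"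
      by (simp add: scaleR_add_left algebra_simps)
    ultimately show "DERIV ?g s :> 0" using DERIV_shift[of ?g 0 0 s] by simp
  qed
  then have "?g t = ?g 0" by (rule DERIV_isconst_all)
  then show ?thesis by simp
qed

lemma pd_zero_iff:
  assumes "\<And>y. f differentiable (at y)"
  shows "(\<forall>x. pd k f x = 0) \<longleftrightarrow> (\<forall>x t. f (x + t *\<^sub>R axis k 1) = f x)"
proof
  assume "\<forall>x. pd k f x = 0" then show "\<forall>x t. f (x + t *\<^sub>R axis k 1) = f x"
    using const_line[OF assms] by blast
next
  assume "\<forall>x t. f (x + t *\<^sub>R axis k 1) = f x"
  then show "\<forall>x. pd k f x = 0" unfolding pd_def by simp
qed

lemma two_var:
  fixes f :: "real^3 \<Rightarrow> real"
  assumes "a \<noteq> b" "a \<noteq> c" "b \<noteq> c" "\<And>i. i = a \<or> i = b \<or> i = c"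
  shows "(\<exists>h. \<forall>x. f x = h (x $ a) (x $ b)) \<longleftrightarrow> (\<forall>x t. f (x + t *\<^sub>R axis c 1) = f x)"
proof
  assume "\<exists>h. \<forall>x. f x = h (x $ a) (x $ b)"
  then obtain h where "\<forall>x. f x = h (x $ a) (x $ b)" by blast
  then show "\<forall>x t. f (x + t *\<^sub>R axis c 1) = f x" using assms by (simp add: axis_def)
next
  assume H: "\<forall>x t. f (x + t *\<^sub>R axis c 1) = f x"
  show "\<exists>h. \<forall>x. f x = h (x $ a) (x $ b)"
  proof (intro exI allI)
    fix x :: "real^3"
    let ?y = "(\<chi> i. if i = a then x $ a else if i = b then x $ b else 0) :: real^3"
    have "x = ?y + (x $ c) *\<^sub>R axis c 1"
      unfolding vec_eq_iff using assms by (auto simp: axis_def)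
    then have "f x = f ?y" using H by metis
    then show "f x = (\<lambda>u v. f (\<chi> i. if i = a then u else if i = b then v else 0)) (x $ a) (x $ b)"
      by simp
  qed
qed

lemma one_var:
  fixes f :: "real^3 \<Rightarrow> real"
  assumes "a \<noteq> b" "a \<noteq> c" "b \<noteq> c" "\<And>i. i = a \<or> i = b \<or> i = c"
  shows "(\<exists>h. \<forall>x. f x = h (x $ c)) \<longleftrightarrow>
     (\<forall>x t. f (x + t *\<^sub>R axis a 1) = f x) \<and> (\<forall>x t. f (x + t *\<^sub>R axis b 1) = f x)"
proof
  assume "\<exists>h. \<forall>x. f x = h (x $ c)"
  then obtain h where "\<forall>x. f x = h (x $ c)" by blast
  then show "(\<forall>x t. f (x + t *\<^sub>R axis a 1) = f x) \<and> (\<forall>x t. f (x + t *\<^sub>R axis b 1) = f x)"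
    using assms by (simp add: axis_def)
next
  assume H: "(\<forall>x t. f (x + t *\<^sub>R axis a 1) = f x) \<and> (\<forall>x t. f (x + t *\<^sub>R axis b 1) = f x)"
  show "\<exists>h. \<forall>x. f x = h (x $ c)"
  proof (intro exI allI)
    fix x :: "real^3"
    let ?y = "(\<chi> i. if i = a then 0 else x $ i) :: real^3"
    let ?z = "(\<chi> i. if i = c then x $ c else 0) :: real^3"
    have "x = ?y + (x $ a) *\<^sub>R axis a 1"
      unfolding vec_eq_iff using assms by (auto simp: axis_def)
    then have 1: "f x = f ?y" using H by metis
    have "?y = ?z + (x $ b) *\<^sub>R axis b 1"
      unfolding vec_eq_iff
    proof
      fix i show "?y $ i = (?z + (x $ b) *\<^sub>R axis b 1) $ i"
        using assms(1,2,3) assms(4)[of i] by (cases "i = a"; cases "i = b"; cases "i = c") (auto simp: axis_def)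
    qed
    then have "f ?y = f ?z" using H[THEN conjunct2, rule_format, of ?z "x $ b"] by simp
    with 1 show "f x = (\<lambda>u. f (\<chi> i. if i = c then u else 0)) (x $ c)"
      by simp
  qed
qed

lemma ff_eq: "frame_field f m k = (if k = m then f m else (\<lambda>x. 0))"
  by (auto simp: frame_field_def)

lemma dm_eq: "diag_metric f i j = (if i = j then (\<lambda>x. 1 / (f i x)^2) else (\<lambda>x. 0))"
  by (auto simp: diag_metric_def)

lemma lie_formula:
  assumes "\<And>i y. f i differentiable (at y)" "\<And>i y. f i y \<noteq> 0"
  shows "lie_deriv_metric (frame_field f m) (diag_metric f) i j x =
    (if i = j then f m x * (-2 * pd m (f i) x / (f i x)^3) else 0)
    + (if j = m then pd i (f m) x / (f m x)^2 else 0)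
    + (if i = m then pd j (f m) x / (f m x)^2 else 0)"
proof -
  have "\<And>k. frame_field f m k x * pd k (diag_metric f i j) x + diag_metric f k j x * pd i (frame_field f m k) x
      + diag_metric f i k x * pd j (frame_field f m k) x =
     (if k = m then (if i = j then f m x * (-2 * pd m (f i) x / (f i x)^3) else 0)
    + (if j = m then pd i (f m) x / (f m x)^2 else 0)
    + (if i = m then pd j (f m) x / (f m x)^2 else 0) else 0)"
    using assms by (auto simp: ff_eq dm_eq pd_const pd_inv_sq diag_metric_def)
  then show ?thesis unfolding lie_deriv_metric_def by simp
qed

lemma killing_iff:
  assumes "\<And>i y. f i differentiable (at y)" "\<And>i y. f i y \<noteq> 0"
    and "a \<noteq> b" "a \<noteq> m" "b \<noteq> m" "\<And>i. i = a \<or> i = b \<or> i = m"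
  shows "killing (diag_metric f) (frame_field f m) \<longleftrightarrow>
    (\<forall>x. pd m (f a) x = 0) \<and> (\<forall>x. pd m (f b) x = 0) \<and>
    (\<forall>x. pd a (f m) x = 0) \<and> (\<forall>x. pd b (f m) x = 0)"
proof -
  have mm: "\<And>x. f m x * (-2 * pd m (f m) x / (f m x)^3) + pd m (f m) x / (f m x)^2 + pd m (f m) x / (f m x)^2 = 0"
    using assms(2) by (simp add: field_simps power2_eq_square power3_eq_cube)
  have c3: "\<And>x. f m x ^ 3 = f m x * (f m x)^2" by (simp add: power3_eq_cube power2_eq_square)
  have L: "killing (diag_metric f) (frame_field f m) \<longleftrightarrow>
    (\<forall>i j x. (if i = j then f m x * (-2 * pd m (f i) x / (f i x)^3) else 0)
    + (if j = m then pd i (f m) x / (f m x)^2 else 0)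
    + (if i = m then pd j (f m) x / (f m x)^2 else 0) = 0)"
    unfolding killing_def using lie_formula[OF assms(1,2)] by simp
  have q: "\<And>i j P. (\<forall>i j. P i j) \<longleftrightarrow> (\<forall>i\<in>{a,b,m}. \<forall>j\<in>{a,b,m}. P i j)"
    using assms(6) by blast
  show ?thesis unfolding L
    apply (subst q)
    using assms(2-5) mm c3 by (auto simp: field_simps)
qed

theorem mainTheorem5:
  fixes f :: "3 \<Rightarrow> real^3 \<Rightarrow> real"
  assumes smooth: "\<And>i. smooth3 (f i)"
    and nonvanishing: "\<And>i x. f i x \<noteq> 0"
  shows "(killing (diag_metric f) (frame_field f 2) \<longleftrightarrow>
            (\<exists>h. \<forall>x. f 2 x = h (x $ 2)) \<and>
            (\<exists>h. \<forall>x. f 1 x = h (x $ 1) (x $ 3)) \<and>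
            (\<exists>h. \<forall>x. f 3 x = h (x $ 1) (x $ 3)))
       \<and> (killing (diag_metric f) (frame_field f 3) \<longleftrightarrow>
            (\<exists>h. \<forall>x. f 3 x = h (x $ 3)) \<and>
            (\<exists>h. \<forall>x. f 1 x = h (x $ 1) (x $ 2)) \<and>
            (\<exists>h. \<forall>x. f 2 x = h (x $ 1) (x $ 2)))"
proof -
  have d: "\<And>i y. f i differentiable (at y)"
    using smooth unfolding smooth3_def by (metis iter_pd.simps(1))
  have all3: "\<And>i::3. i = 1 \<or> i = 2 \<or> i = 3" using exhaust_3 by blast
  have ne: "(1::3) \<noteq> 2" "(1::3) \<noteq> 3" "(2::3) \<noteq> 3" by simp_all
  have A: "\<And>i. i = 1 \<or> i = 3 \<or> i = (2::3)" "\<And>i. i = 1 \<or> i = 2 \<or> i = (3::3)"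
    using all3 by blast+
  have B: "\<And>i. i = 1 \<or> i = 3 \<or> i = (2::3)" "\<And>i. i = 1 \<or> i = 2 \<or> i = (3::3)"
    using all3 by blast+
  note pz = pd_zero_iff[OF d]
  have P1: "killing (diag_metric f) (frame_field f 2) \<longleftrightarrow>
            (\<exists>h. \<forall>x. f 2 x = h (x $ 2)) \<and>
            (\<exists>h. \<forall>x. f 1 x = h (x $ 1) (x $ 3)) \<and>
            (\<exists>h. \<forall>x. f 3 x = h (x $ 1) (x $ 3))"
    unfolding killing_iff[OF d nonvanishing ne(2) ne(1) ne(3)[symmetric] A(1)]
      one_var[OF ne(2) ne(1) ne(3)[symmetric] A(1)]
      two_var[OF ne(2) ne(1) ne(3)[symmetric] A(1)] pz by blast
  have P2: "killing (diag_metric f) (frame_field f 3) \<longleftrightarrow>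
            (\<exists>h. \<forall>x. f 3 x = h (x $ 3)) \<and>
            (\<exists>h. \<forall>x. f 1 x = h (x $ 1) (x $ 2)) \<and>
            (\<exists>h. \<forall>x. f 2 x = h (x $ 1) (x $ 2))"
    unfolding killing_iff[OF d nonvanishing ne(1) ne(2) ne(3) A(2)]
      one_var[OF ne(1) ne(2) ne(3) A(2)]
      two_var[OF ne(1) ne(2) ne(3) A(2)] pz by blast
  show ?thesis using P1 P2 by blast
qed

end
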